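(* For all $x,y\in A^{\mathbb N}$, if $\mathfrak d_L(x,y)=0$, then for every $p\in\mathbb N$ there exist $i,j\in\mathbb N$ such that $x_{[i,i+p)}=y_{[j,j+p)}$.
   Context: $A$ is a finite alphabet, $x_{[i,j)}=x_i\cdots x_{j-1}$. The Levenshtein distance between finite words is $d_L(u,v)=\frac{|u|+|v|}{2}-\ell$, where $\ell$ is the length of a longest common subsequence of $u$ and $v$. The Feldman pseudo-metric is $\mathfrak d_L(x,y)=\limsup_{l\to\infty}\frac{d_L(x_{[0,l)},y_{[0,l)})}{l}$. *)

theory Defs
  imports "HOL-Analysis.Analysis" "HOL-Library.Sublist"
begin

definition factor :: "(nat \<Rightarrow> 'a) \<Rightarrow> nat \<Rightarrow> nat \<Rightarrow> 'a list" where
  "factor x i j = map x [i..<j]"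

definition lcs_len :: "'a list \<Rightarrow> 'a list \<Rightarrow> nat" where
  "lcs_len u v = Max {length w | w. subseq w u \<and> subseq w v}"

definition lev_dist :: "'a list \<Rightarrow> 'a list \<Rightarrow> real" where
  "lev_dist u v = (real (length u) + real (length v)) / 2 - real (lcs_len u v)"

definition feldman :: "(nat \<Rightarrow> 'a) \<Rightarrow> (nat \<Rightarrow> 'a) \<Rightarrow> ereal" where
  "feldman x y = limsup (\<lambda>l. ereal (lev_dist (factor x 0 l) (factor y 0 l) / real l))"

end

theory Submission
  imports Defs
begin

lemma key:
  assumes "0 < p"
  shows "\<And>u v w. length u = n \<Longrightarrow> \<not>(\<exists>s. length s = p \<and> sublist s u \<and> sublist s v) \<Longrightarrow>
     subseq w u \<Longrightarrow> subseq w v \<Longrightarrow>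
     length u div p \<le> (length u - length w) + (length v - length w)"
proof (induction n rule: less_induct)
  case (less n u v w)
  show ?case
  proof (cases "length u < p")
    case True then show ?thesis by simp
  next
    case False
    define a where "a = take p u"
    define b where "b = drop p u"
    have u: "u = a @ b" and la: "length a = p" using False by (auto simp: a_def b_def)
    obtain w1 w2 where w: "w = w1 @ w2" "subseq w1 a" "subseq w2 b"
      using less.prems(3) u by (metis subseq_appendE)
    obtain v1 v2 where v: "v = v1 @ v2" "subseq w1 v1" "subseq w2 v2"
      using less.prems(4) w(1) list_emb_appendD by blast
    have lb: "length b < n" using less.prems(1) u la assms by simp
    have nb: "\<not>(\<exists>s. length s = p \<and> sublist s b \<and> sublist s v2)"
    proof
      assume "\<exists>s. length s = p \<and> sublist s b \<and> sublist s v2"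
      then obtain s where s: "length s = p" "sublist s b" "sublist s v2" by blast
      have "sublist b u" "sublist v2 v" using u v(1) by auto
      then have "sublist s u" "sublist s v" using s sublist_order.order_trans by blast+
      then show False using less.prems(2) s(1) by blast
    qed
    have IH: "length b div p \<le> (length b - length w2) + (length v2 - length w2)"
      using less.IH[OF lb refl nb w(3) v(3)] .
    have l1: "length w1 \<le> length a" "length w1 \<le> length v1"
      using w(2) v(2) list_emb_length by blast+
    have l2: "length w2 \<le> length b" "length w2 \<le> length v2"
      using w(3) v(3) list_emb_length by blast+
    have one: "1 \<le> (length a - length w1) + (length v1 - length w1)"
    proof (rule ccontr)
      assume "\<not> ?thesis"
      then have "length w1 = length a" "length w1 = length v1" using l1 by auto
      then have "w1 = a" "w1 = v1" using w(2) v(2) subseq_same_length by blast+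
      then show False using less.prems(2) u v(1) la by auto
    qed
    have "length u div p = length b div p + 1" using u la assms False
      by (simp add: le_div_geq)
    then show ?thesis using IH one l1 l2 u v w by simp
  qed
qed

lemma sub_factor:
  assumes "sublist s (map x [0..<l])"
  shows "\<exists>i. s = factor x i (i + length s)"
proof -
  obtain ps ss where e: "map x [0..<l] = ps @ s @ ss" using assms sublist_def by blast
  have len: "length ps + length s \<le> l" using arg_cong[OF e, of length] by simp
  have "s = take (length s) (drop (length ps) (map x [0..<l]))" using e by simp
  also have "\<dots> = map x [length ps..<length ps + length s]"
    using len by (simp add: drop_map take_map)
  finally show ?thesis unfolding factor_def by blast
qed

lemma lev_bound:
  fixes x y :: "nat \<Rightarrow> 'a"
  assumes p: "0 < p" and nf: "\<forall>i j. factor x i (i + p) \<noteq> factor y j (j + p)"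
  shows "real (l div p) / 2 \<le> lev_dist (factor x 0 l) (factor y 0 l)"
proof -
  define u where "u = factor x 0 l"
  define v where "v = factor y 0 l"
  have lu: "length u = l" "length v = l" by (simp_all add: u_def v_def factor_def)
  have ns: "\<not>(\<exists>s. length s = p \<and> sublist s u \<and> sublist s v)"
  proof
    assume "\<exists>s. length s = p \<and> sublist s u \<and> sublist s v"
    then obtain s where s: "length s = p" "sublist s u" "sublist s v" by blast
    obtain i where "s = factor x i (i + p)" using sub_factor[of s x l] s unfolding u_def factor_def by auto
    moreover obtain j where "s = factor y j (j + p)" using sub_factor[of s y l] s unfolding v_def factor_def by auto
    ultimately show False using nf by metis
  qed
  define S where "S = {length w | w. subseq w u \<and> subseq w v}"
  have fin: "finite S"
    by (rule finite_subset[of _ "{..length u}"]) (auto simp: S_def dest: list_emb_length)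
  have ne: "S \<noteq> {}" unfolding S_def by (rule ccontr) (auto)
  obtain w where w: "subseq w u" "subseq w v" "lcs_len u v = length w"
    using Max_in[OF fin ne] unfolding S_def lcs_len_def by auto
  have "length u div p \<le> (length u - length w) + (length v - length w)"
    using key[OF p refl ns w(1) w(2)] .
  moreover have "length w \<le> l" using w(1) lu list_emb_length by fastforce
  ultimately have n: "l div p \<le> 2 * (l - length w)" using lu by (metis mult_2)
  have "real (l div p) \<le> real (2 * (l - length w))" using n by (simp only: of_nat_le_iff)
  then have "real (l div p) \<le> 2 * (real l - real (length w))" using \<open>length w \<le> l\<close> by (simp add: of_nat_diff)
  then show ?thesis unfolding lev_dist_def u_def[symmetric] v_def[symmetric] w(3) lu by simp
qed

theorem lemmal:
  fixes x y :: "nat \<Rightarrow> 'a::finite"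
  assumes "feldman x y = 0"
  shows "\<forall>p::nat. \<exists>i j::nat. factor x i (i + p) = factor y j (j + p)"
proof (rule ccontr)
  assume "\<not> ?thesis"
  then obtain p where nf: "\<forall>i j. factor x i (i + p) \<noteq> factor y j (j + p)" by blast
  have p: "0 < p"
  proof (rule ccontr)
    assume "\<not> 0 < p" then have "p = 0" by simp
    then show False using nf by (simp add: factor_def)
  qed
  have ev: "\<forall>\<^sub>F l in sequentially. ereal (1 / (4 * real p)) \<le>
      ereal (lev_dist (factor x 0 l) (factor y 0 l) / real l)"
  proof (rule eventually_sequentiallyI[of "2 * p"])
    fix l assume l: "2 * p \<le> l"
    have lpos: "0 < real l" using l p by simp
    have "real l / real p - 1 \<le> real (l div p)"
    proof -
      have "real l = real p * real (l div p) + real (l mod p)"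
        by (metis of_nat_add of_nat_mult div_mult_mod_eq mult.commute)
      moreover have "real (l mod p) < real p" using p by simp
      ultimately have "real l < real p * (real (l div p) + 1)" by (simp add: algebra_simps)
      then have "real l / real p < real (l div p) + 1" using p by (simp add: field_simps)
      then show ?thesis by simp
    qed
    moreover have "real l / (2 * real p) \<le> real l / real p - 1"
    proof -
      have "2 * real p \<le> real l" using l by simp
      then have "1 \<le> real l / (2 * real p)" using p by (simp add: field_simps)
      moreover have "real l / real p = 2 * (real l / (2 * real p))" using p by (simp add: field_simps)
      ultimately show ?thesis by linarith
    qed
    ultimately have "real l / (4 * real p) \<le> lev_dist (factor x 0 l) (factor y 0 l)"
      using lev_bound[OF p nf, of l] by (simp add: field_simps)
    then have "1 / (4 * real p) \<le> lev_dist (factor x 0 l) (factor y 0 l) / real l"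
      using lpos p by (simp add: field_simps)
    then show "ereal (1 / (4 * real p)) \<le> ereal (lev_dist (factor x 0 l) (factor y 0 l) / real l)"
      by simp
  qed
  have "ereal (1 / (4 * real p)) \<le> feldman x y"
    unfolding feldman_def by (rule le_Limsup[OF _ ev]) simp
  then show False using assms p by simp
qed

end
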